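(* Let $S$ and $T$ be trees and give $E(S)\times E(T)$ the product partial order. Sending a shuffle $A$ of $S$ and $T$ to its set of edge labels gives a bijection between $Sh(S,T)$ and the set of subsets $A\subseteq E(S)\times E(T)$ satisfying: (1) the induced partial order on $A$ is treelike; (2) the set of maximal elements of $A$ is exactly $\mathrm{Leaves}(S)\times\mathrm{Leaves}(T)$; (3) $A$ is maximal under inclusion among subsets satisfying (1) and (2). Moreover, for a shuffle, the tree order on its edges coincides with the order induced from $E(S)\times E(T)$.
   Context: A tree is a finite connected graph without cycles whose external edges are open (attached to only one vertex). One external edge is designated the root; the other external edges are the leaves. Each vertex has exactly one outgoing edge (towards the root) and a strictly positive number of incoming edges. Trees carry no planar structure. $E(T)$ denotes the set of edges of $T$, partially ordered by $e\le e'$ iff $e$ lies on the path from $e'$ to the root; $r_T$ denotes the root edge. For a non-leaf edge $e$, the edges immediately above $e$ are the incoming edges of the vertex whose outgoing edge is $e$. A partial order is treelike if it is finite, has a smallest element, and for each element $e$ the set $\{d: d\le e\}$ is linearly ordered (this is exactly the edge order of a tree). Shuffle: for trees $S,T$, a shuffle of $S$ and $T$ is a tree $A$ with a labelling of each edge by a pair $(s,t)\in E(S)\times E(T)$ such that: (1) the root of $A$ is labelled $(r_S,r_T)$; (2) the labelling restricts to a bijection from the leaves of $A$ onto $\mathrm{Leaves}(S)\times \mathrm{Leaves}(T)$; (3) if an edge of $A$ labelled $(s,t)$ is not a leaf of $A$, then the incoming edges of the vertex of $A$ directly above it are labelled either exactly $(s_1,t),\dots,(s_m,t)$, one for each edge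 $s_i$ immediately above $s$ in $S$, or exactly $(s,t_1),\dots,(s,t_n)$, one for each edge $t_j$ immediately above $t$ in $T$. Shuffles are taken up to isomorphism of labelled trees; $Sh(S,T)$ is the set of shuffles. *)

theory Defs
  imports Main
begin

text \<open>A tree is represented by its set of edges E together with the edge order le
  (e \<le> e' iff e lies on the path from e' to the root).  As stated in the paper,
  the edge orders of trees are exactly the treelike partial orders, and the tree
  (without planar structure) is recovered from its edge order up to isomorphism.\<close>

definition treelike :: "'e set \<Rightarrow> ('e \<Rightarrow> 'e \<Rightarrow> bool) \<Rightarrow> bool" where
  "treelike E le \<longleftrightarrow>
     finite E \<and>
     (\<forall>x\<in>E. le x x) \<and>
     (\<forall>x\<in>E. \<forall>y\<in>E. le x y \<and> le y x \<longrightarrow> x = y) \<and>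
     (\<forall>x\<in>E. \<forall>y\<in>E. \<forall>z\<in>E. le x y \<and> le y z \<longrightarrow> le x z) \<and>
     (\<exists>r\<in>E. \<forall>x\<in>E. le r x) \<and>
     (\<forall>e\<in>E. \<forall>x\<in>E. \<forall>y\<in>E. le x e \<and> le y e \<longrightarrow> le x y \<or> le y x)"

definition tree_root :: "'e set \<Rightarrow> ('e \<Rightarrow> 'e \<Rightarrow> bool) \<Rightarrow> 'e" where
  "tree_root E le = (THE r. r \<in> E \<and> (\<forall>x\<in>E. le r x))"

text \<open>Leaves: maximal edges (every vertex has at least one incoming edge).\<close>
definition leaves :: "'e set \<Rightarrow> ('e \<Rightarrow> 'e \<Rightarrow> bool) \<Rightarrow> 'e set" where
  "leaves E le = {x\<in>E. \<forall>y\<in>E. le x y \<longrightarrow> y = x}"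

text \<open>Edges immediately above x (the incoming edges of the vertex with outgoing edge x).\<close>
definition above :: "'e set \<Rightarrow> ('e \<Rightarrow> 'e \<Rightarrow> bool) \<Rightarrow> 'e \<Rightarrow> 'e set" where
  "above E le x = {y\<in>E. le x y \<and> y \<noteq> x \<and> (\<forall>z\<in>E. le x z \<and> le z y \<longrightarrow> z = x \<or> z = y)}"

definition prod_le :: "('a \<Rightarrow> 'a \<Rightarrow> bool) \<Rightarrow> ('b \<Rightarrow> 'b \<Rightarrow> bool) \<Rightarrow> 'a \<times> 'b \<Rightarrow> 'a \<times> 'b \<Rightarrow> bool" where
  "prod_le leS leT p q \<longleftrightarrow> leS (fst p) (fst q) \<and> leT (snd p) (snd q)"

definition is_shuffle ::
  "'a set \<Rightarrow> ('a \<Rightarrow> 'a \<Rightarrow> bool) \<Rightarrow> 'b set \<Rightarrow> ('b \<Rightarrow> 'b \<Rightarrow> bool) \<Rightarrow>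
   'c set \<Rightarrow> ('c \<Rightarrow> 'c \<Rightarrow> bool) \<Rightarrow> ('c \<Rightarrow> 'a \<times> 'b) \<Rightarrow> bool" where
  "is_shuffle ES leS ET leT EA leA lab \<longleftrightarrow>
     treelike EA leA \<and>
     lab ` EA \<subseteq> ES \<times> ET \<and>
     lab (tree_root EA leA) = (tree_root ES leS, tree_root ET leT) \<and>
     bij_betw lab (leaves EA leA) (leaves ES leS \<times> leaves ET leT) \<and>
     (\<forall>x\<in>EA. x \<notin> leaves EA leA \<longrightarrow>
        bij_betw lab (above EA leA x) ((\<lambda>s'. (s', snd (lab x))) ` above ES leS (fst (lab x))) \<or>
        bij_betw lab (above EA leA x) ((\<lambda>t'. (fst (lab x), t')) ` above ET leT (snd (lab x))))"

definition labelled_iso ::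
  "'c set \<Rightarrow> ('c \<Rightarrow> 'c \<Rightarrow> bool) \<Rightarrow> ('c \<Rightarrow> 'l) \<Rightarrow>
   'd set \<Rightarrow> ('d \<Rightarrow> 'd \<Rightarrow> bool) \<Rightarrow> ('d \<Rightarrow> 'l) \<Rightarrow> bool" where
  "labelled_iso EA leA labA EB leB labB \<longleftrightarrow>
     (\<exists>f. bij_betw f EA EB \<and>
          (\<forall>x\<in>EA. \<forall>y\<in>EA. leA x y \<longleftrightarrow> leB (f x) (f y)) \<and>
          (\<forall>x\<in>EA. labB (f x) = labA x))"

definition shuffle_set_pre ::
  "'a set \<Rightarrow> ('a \<Rightarrow> 'a \<Rightarrow> bool) \<Rightarrow> 'b set \<Rightarrow> ('b \<Rightarrow> 'b \<Rightarrow> bool) \<Rightarrow> ('a \<times> 'b) set \<Rightarrow> bool" where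
  "shuffle_set_pre ES leS ET leT A \<longleftrightarrow>
     A \<subseteq> ES \<times> ET \<and>
     treelike A (prod_le leS leT) \<and>
     leaves A (prod_le leS leT) = leaves ES leS \<times> leaves ET leT"

definition shuffle_set ::
  "'a set \<Rightarrow> ('a \<Rightarrow> 'a \<Rightarrow> bool) \<Rightarrow> 'b set \<Rightarrow> ('b \<Rightarrow> 'b \<Rightarrow> bool) \<Rightarrow> ('a \<times> 'b) set \<Rightarrow> bool" where
  "shuffle_set ES leS ET leT A \<longleftrightarrow>
     shuffle_set_pre ES leS ET leT A \<and>
     (\<forall>B. shuffle_set_pre ES leS ET leT B \<and> A \<subseteq> B \<longrightarrow> B = A)"

end

theory Submission imports Defs begin

locale tl = fixes E :: "'e set" and le :: "'e \<Rightarrow> 'e \<Rightarrow> bool"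
  assumes tl: "treelike E le"
begin

lemma fin: "finite E"
  and refl: "x\<in>E \<Longrightarrow> le x x"
  and antisym: "x\<in>E \<Longrightarrow> y\<in>E \<Longrightarrow> le x y \<Longrightarrow> le y x \<Longrightarrow> x = y"
  and trans: "x\<in>E \<Longrightarrow> y\<in>E \<Longrightarrow> z\<in>E \<Longrightarrow> le x y \<Longrightarrow> le y z \<Longrightarrow> le x z"
  and lin: "e\<in>E \<Longrightarrow> x\<in>E \<Longrightarrow> y\<in>E \<Longrightarrow> le x e \<Longrightarrow> le y e \<Longrightarrow> le x y \<or> le y x"
  and ex_root: "\<exists>r\<in>E. \<forall>x\<in>E. le r x"
  using tl unfolding treelike_def by blast+

lemma root_in: "tree_root E le \<in> E" and root_le: "x \<in> E \<Longrightarrow> le (tree_root E le) x"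
proof -
  obtain r where r: "r\<in>E" "\<forall>x\<in>E. le r x" using ex_root by blast
  have "tree_root E le = r" unfolding tree_root_def
    apply (rule the_equality) using r antisym by blast+
  then show "tree_root E le \<in> E" "x \<in> E \<Longrightarrow> le (tree_root E le) x" using r by auto
qed

lemma root_unique: "r \<in> E \<Longrightarrow> (\<forall>x\<in>E. le r x) \<Longrightarrow> tree_root E le = r"
  unfolding tree_root_def by (rule the_equality) (use antisym in blast)+

definition "ups x = {y\<in>E. le x y \<and> y \<noteq> x}"
definition "dns x = {y\<in>E. le y x \<and> y \<noteq> x}"

lemma ups_less: assumes "x\<in>E" "y\<in>E" "le x y" "y\<noteq>x" shows "card (ups y) < card (ups x)"
proof (rule psubset_card_mono)
  show "finite (ups x)" using fin unfolding ups_def by auto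
  have "ups y \<subseteq> ups x" unfolding ups_def using assms trans antisym by blast
  moreover have "y \<in> ups x" "y \<notin> ups y" using assms unfolding ups_def by auto
  ultimately show "ups y \<subset> ups x" by blast
qed

lemma dns_less: assumes "x\<in>E" "y\<in>E" "le x y" "y\<noteq>x" shows "card (dns x) < card (dns y)"
proof (rule psubset_card_mono)
  show "finite (dns y)" using fin unfolding dns_def by auto
  have "dns x \<subseteq> dns y" unfolding dns_def using assms trans antisym by blast
  moreover have "x \<in> dns y" "x \<notin> dns x" using assms unfolding dns_def by auto
  ultimately show "dns x \<subset> dns y" by blast
qed

lemma up_induct[consumes 1, case_names step]:
  assumes "x \<in> E" and "\<And>x. x\<in>E \<Longrightarrow> (\<And>y. y\<in>E \<Longrightarrow> le x y \<Longrightarrow> y\<noteq>x \<Longrightarrow> P y) \<Longrightarrow> P x"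
  shows "P x"
  using assms(1)
proof (induction "card (ups x)" arbitrary: x rule: less_induct)
  case less
  then show ?case using assms(2) ups_less by blast
qed

lemma down_induct[consumes 1, case_names step]:
  assumes "x \<in> E" and "\<And>x. x\<in>E \<Longrightarrow> (\<And>y. y\<in>E \<Longrightarrow> le y x \<Longrightarrow> y\<noteq>x \<Longrightarrow> P y) \<Longrightarrow> P x"
  shows "P x"
  using assms(1)
proof (induction "card (dns x)" arbitrary: x rule: less_induct)
  case less
  then show ?case using assms(2) dns_less by blast
qed

lemma aboveD: "c \<in> above E le x \<Longrightarrow> c\<in>E \<and> le x c \<and> c\<noteq>x"
  unfolding above_def by auto

lemma cover_eq: "c \<in> above E le x \<Longrightarrow> z\<in>E \<Longrightarrow> le x z \<Longrightarrow> le z c \<Longrightarrow> z = x \<or> z = c"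
  unfolding above_def by auto

lemma covers_incomp: "c1 \<in> above E le x \<Longrightarrow> c2 \<in> above E le x \<Longrightarrow> le c1 c2 \<Longrightarrow> c1 = c2"
  using cover_eq aboveD by metis

lemma cover_exists: assumes "x\<in>E" "y\<in>E" "le x y" "y\<noteq>x" shows "\<exists>c\<in>above E le x. le c y"
  using assms(2,3,4)
proof (induction y rule: down_induct)
  case (step y)
  show ?case
  proof (cases "y \<in> above E le x")
    case True
    then show ?thesis using refl step by blast
  next
    case False
    then obtain z where z: "z\<in>E" "le x z" "le z y" "z \<noteq> x" "z \<noteq> y"
      using step unfolding above_def by blast
    then obtain c where "c\<in>above E le x" "le c z" using step by blast
    then show ?thesis using trans aboveD z step by blast
  qed
qed

lemma leaf_above: "x\<in>E \<Longrightarrow> \<exists>l\<in>leaves E le. le x l"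
proof (induction x rule: up_induct)
  case (step x)
  show ?case
  proof (cases "x \<in> leaves E le")
    case True then show ?thesis using refl step by blast
  next
    case False
    then obtain y where "y\<in>E" "le x y" "y\<noteq>x" using step unfolding leaves_def by blast
    then have y: "y\<in>E" "le x y" "y\<noteq>x" by auto
    obtain l where l: "l\<in>leaves E le" "le y l" using step.IH[OF y] by blast
    have "l \<in> E" using l(1) unfolding leaves_def by blast
    then have "le x l" using trans[OF step.hyps y(1) _ y(2) l(2)] by blast
    then show ?thesis using l(1) by blast
  qed
qed

lemma leaf_max: "l \<in> leaves E le \<Longrightarrow> y\<in>E \<Longrightarrow> le l y \<Longrightarrow> y = l"
  unfolding leaves_def by auto

lemma nonleaf_cover: assumes "x\<in>E" "x \<notin> leaves E le" shows "\<exists>c. c\<in>above E le x"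
proof -
  obtain l where "l\<in>leaves E le" "le x l" using leaf_above assms by blast
  moreover have "l \<noteq> x" using assms calculation by auto
  ultimately show ?thesis using cover_exists assms unfolding leaves_def by blast
qed

lemma leaf_no_cover: "x \<in> leaves E le \<Longrightarrow> above E le x = {}"
  unfolding leaves_def above_def by auto

lemma max_of_chain: assumes "D \<subseteq> E" "d \<in> D" "\<forall>x\<in>D. \<forall>y\<in>D. le x y \<or> le y x"
  shows "\<exists>a\<in>D. \<forall>y\<in>D. le y a"
proof -
  obtain a where a: "a \<in> D" "\<forall>y. y\<in>D \<longrightarrow> card (ups a) \<le> card (ups y)"
    using ex_has_least_nat[of "\<lambda>x. x\<in>D" d "\<lambda>x. card (ups x)"] assms by blast
  have "le y a" if "y\<in>D" for y
  proof (rule ccontr)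
    assume "\<not> le y a"
    then have "le a y" "y \<noteq> a" using assms that a refl by blast+
    then have "card (ups y) < card (ups a)" using ups_less assms a that by blast
    then show False using a that by force
  qed
  then show ?thesis using a by blast
qed

end

lemma treelike_transfer:
  assumes "treelike E le" "inj_on f E" "\<And>x y. x\<in>E \<Longrightarrow> y\<in>E \<Longrightarrow> le' (f x) (f y) \<longleftrightarrow> le x y"
  shows "treelike (f`E) le'" "leaves (f`E) le' = f ` leaves E le"
proof -
  interpret tl E le by standard fact
  note eq = assms(3)
  show "treelike (f`E) le'" unfolding treelike_def
  proof (intro conjI ballI impI)
    show "finite (f ` E)" using fin by simp
    fix x assume "x \<in> f ` E" then obtain a where a: "a \<in> E" "x = f a" by blast
    then show "le' x x" using refl eq by simp
  next
    fix x y assume "x \<in> f ` E" "y \<in> f ` E" "le' x y \<and> le' y x"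
    then obtain a b where "a \<in> E" "x = f a" "b \<in> E" "y = f b" "le' (f a) (f b)" "le' (f b) (f a)" by blast
    then have "le a b" "le b a" using eq by auto
    then have "a = b" using antisym[OF \<open>a \<in> E\<close> \<open>b \<in> E\<close>] by simp
    then show "x = y" using \<open>x = f a\<close> \<open>y = f b\<close> by simp
  next
    fix x y z assume "x \<in> f ` E" "y \<in> f ` E" "z \<in> f ` E" "le' x y \<and> le' y z"
    then obtain a b c where "a \<in> E" "x = f a" "b \<in> E" "y = f b" "c \<in> E" "z = f c"
       "le' (f a) (f b)" "le' (f b) (f c)" by blast
    then have "le a b" "le b c" "a \<in> E" "b \<in> E" "c \<in> E" using eq by auto
    then have "le a c" using trans[of a b c] by simp
    then show "le' x z" using eq \<open>x = f a\<close> \<open>z = f c\<close> \<open>a \<in> E\<close> \<open>c \<in> E\<close> by simp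
  next
    obtain r where r: "r \<in> E" "\<forall>x\<in>E. le r x" using ex_root by blast
    show "\<exists>r\<in>f ` E. \<forall>x\<in>f ` E. le' r x"
    proof (intro bexI ballI)
      fix x assume "x \<in> f ` E" then obtain a where "a \<in> E" "x = f a" by blast
      then show "le' (f r) x" using r eq by simp
    qed (use r in simp)
  next
    fix e x y assume "e \<in> f ` E" "x \<in> f ` E" "y \<in> f ` E" "le' x e \<and> le' y e"
    then obtain a b c where "a \<in> E" "e = f a" "b \<in> E" "x = f b" "c \<in> E" "y = f c"
       "le' (f b) (f a)" "le' (f c) (f a)" by blast
    then have "le b a" "le c a" "a \<in> E" "b \<in> E" "c \<in> E" using eq by auto
    then have "le b c \<or> le c b" using lin[of a b c] by simp
    then show "le' x y \<or> le' y x" using eq \<open>x = f b\<close> \<open>y = f c\<close> \<open>b \<in> E\<close> \<open>c \<in> E\<close> by simp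
  qed
  show "leaves (f`E) le' = f ` leaves E le"
  proof
    show "leaves (f`E) le' \<subseteq> f ` leaves E le"
    proof
      fix x assume x: "x \<in> leaves (f`E) le'"
      then obtain a where a: "a \<in> E" "x = f a" unfolding leaves_def by blast
      have "\<forall>b\<in>E. le a b \<longrightarrow> b = a"
      proof (intro ballI impI)
        fix b assume "b \<in> E" "le a b"
        then have "le' (f a) (f b)" using eq a by simp
        moreover have "f b \<in> f ` E" using \<open>b \<in> E\<close> by simp
        moreover have "\<forall>y\<in>f ` E. le' x y \<longrightarrow> y = x" using x unfolding leaves_def by simp
        ultimately have "f b = f a" using a \<open>b \<in> E\<close> by blast
        then show "b = a" using assms(2) a \<open>b \<in> E\<close> unfolding inj_on_def by blast
      qed
      then show "x \<in> f ` leaves E le" using a unfolding leaves_def by blast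
    qed
    show "f ` leaves E le \<subseteq> leaves (f`E) le'"
    proof
      fix x assume "x \<in> f ` leaves E le"
      then obtain a where a: "a \<in> E" "x = f a" "\<forall>b\<in>E. le a b \<longrightarrow> b = a" unfolding leaves_def by blast
      have "\<forall>y\<in>f ` E. le' x y \<longrightarrow> y = x"
      proof (intro ballI impI)
        fix y assume "y \<in> f ` E" "le' x y"
        then obtain b where "b \<in> E" "y = f b" "le' (f a) (f b)" using a by blast
        then have "le a b" using a eq by auto
        then show "y = x" using a \<open>b \<in> E\<close> \<open>y = f b\<close> by auto
      qed
      then show "x \<in> leaves (f`E) le'" using a unfolding leaves_def by blast
    qed
  qed
qed


locale two = S: tl ES leS + T: tl ET leT
  for ES :: "'a set" and leS and ET :: "'b set" and leT
begin

abbreviation "P \<equiv> prod_le leS leT"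
abbreviation "LL \<equiv> leaves ES leS \<times> leaves ET leT"
abbreviation "rr \<equiv> (tree_root ES leS, tree_root ET leT)"

lemma P_refl: "p \<in> ES\<times>ET \<Longrightarrow> P p p"
  unfolding prod_le_def using S.refl T.refl by (cases p) simp
lemma P_antisym: assumes "p \<in> ES\<times>ET" "q \<in> ES\<times>ET" "P p q" "P q p" shows "p = q"
proof -
  have "fst p = fst q" using S.antisym assms unfolding prod_le_def by (simp add: mem_Times_iff)
  moreover have "snd p = snd q" using T.antisym assms unfolding prod_le_def by (simp add: mem_Times_iff)
  ultimately show ?thesis by (simp add: prod_eq_iff)
qed
lemma P_trans: assumes "p \<in> ES\<times>ET" "q \<in> ES\<times>ET" "r \<in> ES\<times>ET" "P p q" "P q r" shows "P p r"
proof -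
  have "leS (fst p) (fst r)"
    using S.trans[of "fst p" "fst q" "fst r"] assms unfolding prod_le_def by (simp add: mem_Times_iff)
  moreover have "leT (snd p) (snd r)"
    using T.trans[of "snd p" "snd q" "snd r"] assms unfolding prod_le_def by (simp add: mem_Times_iff)
  ultimately show ?thesis unfolding prod_le_def by simp
qed
lemma LL_max: assumes "p \<in> LL" "q \<in> ES\<times>ET" "P p q" shows "q = p"
proof -
  have "fst q = fst p" using S.leaf_max[of "fst p" "fst q"] assms unfolding prod_le_def by (simp add: mem_Times_iff)
  moreover have "snd q = snd p" using T.leaf_max[of "snd p" "snd q"] assms unfolding prod_le_def by (simp add: mem_Times_iff)
  ultimately show ?thesis by (simp add: prod_eq_iff)
qed
lemma LL_sub: "LL \<subseteq> ES \<times> ET" unfolding leaves_def by auto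
lemma rr_in: "rr \<in> ES \<times> ET" using S.root_in T.root_in by simp
lemma rr_le: "q \<in> ES\<times>ET \<Longrightarrow> P rr q"
  unfolding prod_le_def using S.root_le T.root_le by (simp add: mem_Times_iff)
lemma leaf_pair_above: assumes "q \<in> ES\<times>ET" shows "\<exists>p\<in>LL. P q p"
proof -
  obtain l where l: "l \<in> leaves ES leS" "leS (fst q) l" using S.leaf_above assms by (auto simp: mem_Times_iff)
  obtain m where m: "m \<in> leaves ET leT" "leT (snd q) m" using T.leaf_above assms by (auto simp: mem_Times_iff)
  show ?thesis using l m unfolding prod_le_def by force
qed

end

locale shuf = two ES leS ET leT
  for ES :: "'a set" and leS and ET :: "'b set" and leT +
  fixes EA :: "'c set" and leA lab
  assumes sh: "is_shuffle ES leS ET leT EA leA lab"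
begin

lemma shd: "treelike EA leA \<and> lab ` EA \<subseteq> ES \<times> ET \<and> lab (tree_root EA leA) = rr \<and>
     bij_betw lab (leaves EA leA) LL \<and>
     (\<forall>x\<in>EA. x \<notin> leaves EA leA \<longrightarrow>
        bij_betw lab (above EA leA x) ((\<lambda>s'. (s', snd (lab x))) ` above ES leS (fst (lab x))) \<or>
        bij_betw lab (above EA leA x) ((\<lambda>t'. (fst (lab x), t')) ` above ET leT (snd (lab x))))"
  using sh unfolding is_shuffle_def .

sublocale A: tl EA leA by (rule tl.intro) (rule shd[THEN conjunct1])

lemma lab_in: "x \<in> EA \<Longrightarrow> lab x \<in> ES \<times> ET"
  using shd[THEN conjunct2, THEN conjunct1] by (rule subsetD[OF _ imageI])
lemma lab_root: "lab (tree_root EA leA) = rr"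
  by (rule shd[THEN conjunct2, THEN conjunct2, THEN conjunct1])
lemma lab_leaves: "bij_betw lab (leaves EA leA) LL"
  by (rule shd[THEN conjunct2, THEN conjunct2, THEN conjunct2, THEN conjunct1])
lemma lab_above: "x\<in>EA \<Longrightarrow> x \<notin> leaves EA leA \<Longrightarrow>
        bij_betw lab (above EA leA x) ((\<lambda>s'. (s', snd (lab x))) ` above ES leS (fst (lab x))) \<or>
        bij_betw lab (above EA leA x) ((\<lambda>t'. (fst (lab x), t')) ` above ET leT (snd (lab x)))"
  using shd[THEN conjunct2, THEN conjunct2, THEN conjunct2, THEN conjunct2] by blast

lemma cstep: assumes c: "c \<in> above EA leA x" and xE: "x \<in> EA" shows "P (lab x) (lab c) \<and> lab c \<noteq> lab x"
proof -
  have xl: "x \<notin> leaves EA leA"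
  proof
    assume "x \<in> leaves EA leA"
    then have "above EA leA x = {}" by (rule A.leaf_no_cover)
    then show False using c by simp
  qed
  obtain s t where st: "lab x = (s,t)" by (cases "lab x")
  have stE: "s \<in> ES" "t \<in> ET" using lab_in[OF xE] st by auto
  from lab_above[OF xE xl] show ?thesis
  proof
    assume b: "bij_betw lab (above EA leA x) ((\<lambda>s'. (s', snd (lab x))) ` above ES leS (fst (lab x)))"
    have "lab c \<in> lab ` above EA leA x" using c by (rule imageI)
    also have "\<dots> = (\<lambda>s'. (s', snd (lab x))) ` above ES leS (fst (lab x))"
      using b by (rule bij_betw_imp_surj_on)
    finally obtain s' where s': "s' \<in> above ES leS s" "lab c = (s', t)" using st by auto
    have "leS s s'" "s' \<noteq> s" using S.aboveD[OF s'(1)] by auto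
    moreover have "leT t t" using T.refl[OF stE(2)] .
    ultimately show ?thesis using s'(2) st unfolding prod_le_def by simp
  next
    assume b: "bij_betw lab (above EA leA x) ((\<lambda>t'. (fst (lab x), t')) ` above ET leT (snd (lab x)))"
    have "lab c \<in> lab ` above EA leA x" using c by (rule imageI)
    also have "\<dots> = (\<lambda>t'. (fst (lab x), t')) ` above ET leT (snd (lab x))"
      using b by (rule bij_betw_imp_surj_on)
    finally obtain t' where t': "t' \<in> above ET leT t" "lab c = (s, t')" using st by auto
    have "leT t t'" "t' \<noteq> t" using T.aboveD[OF t'(1)] by auto
    moreover have "leS s s" using S.refl[OF stE(1)] .
    ultimately show ?thesis using t'(2) st unfolding prod_le_def by simp
  qed
qed

lemma mono_strict: assumes "x \<in> EA" shows "\<forall>y\<in>EA. leA x y \<and> y \<noteq> x \<longrightarrow> P (lab x) (lab y) \<and> lab y \<noteq> lab x"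
  using assms
proof (induction x rule: A.up_induct)
  case (step x)
  show ?case
  proof (intro ballI impI)
    fix y assume y: "y \<in> EA" "leA x y \<and> y \<noteq> x"
    obtain c where c: "c \<in> above EA leA x" "leA c y" using A.cover_exists y step by blast
    have c1: "P (lab x) (lab c) \<and> lab c \<noteq> lab x" using c(1) step.hyps by (rule cstep)
    have cE: "c \<in> EA" "leA x c" "c \<noteq> x" using A.aboveD c by auto
    show "P (lab x) (lab y) \<and> lab y \<noteq> lab x"
    proof (cases "c = y")
      case True then show ?thesis using c1 by simp
    next
      case False
      then have "P (lab c) (lab y) \<and> lab y \<noteq> lab c" using step.IH[OF cE] y c by blast
      then have cy: "P (lab c) (lab y)" "lab y \<noteq> lab c" by auto
      have ins: "lab x \<in> ES\<times>ET" "lab c \<in> ES\<times>ET" "lab y \<in> ES\<times>ET"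
        using lab_in step.hyps cE(1) y(1) by auto
      have xy: "P (lab x) (lab y)" using P_trans[OF ins] c1 cy(1) by simp
      have "lab y \<noteq> lab x"
      proof
        assume e: "lab y = lab x"
        have "lab x = lab c" using P_antisym[OF ins(1,2)] c1 cy(1) e by simp
        then show False using c1 by simp
      qed
      then show ?thesis using xy by simp
    qed
  qed
qed

lemma mono: "x \<in> EA \<Longrightarrow> y \<in> EA \<Longrightarrow> leA x y \<Longrightarrow> P (lab x) (lab y)"
proof (cases "x = y")
  case True
  assume "x \<in> EA" then show ?thesis using True P_refl[OF lab_in] by simp
next
  case False
  assume "x \<in> EA" "y \<in> EA" "leA x y"
  then show ?thesis using mono_strict[of x] False by simp
qed

lemma reach_leaf: assumes "x \<in> EA"
  shows "\<forall>p\<in>LL. P (lab x) p \<longrightarrow> (\<exists>l\<in>leaves EA leA. leA x l \<and> lab l = p)"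
  using assms
proof (induction x rule: A.up_induct)
  case (step x)
  show ?case
  proof (intro ballI impI)
    fix p assume p: "p \<in> LL" "P (lab x) p"
    show "\<exists>l\<in>leaves EA leA. leA x l \<and> lab l = p"
    proof (cases "x \<in> leaves EA leA")
      case True
      have "lab x \<in> lab ` leaves EA leA" using True by (rule imageI)
      also have "\<dots> = LL" using lab_leaves by (rule bij_betw_imp_surj_on)
      finally have lx: "lab x \<in> LL" .
      have "p \<in> ES \<times> ET" using p(1) LL_sub by (rule subsetD[rotated])
      then have "p = lab x" using LL_max[OF lx _ p(2)] by simp
      then show ?thesis using True A.refl[OF step.hyps] by (intro bexI[of _ x]) auto
    next
      case False
      obtain s t where st: "lab x = (s,t)" by (cases "lab x")
      obtain l m where lm: "p = (l,m)" by (cases p)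
      have sE: "s \<in> ES" "t \<in> ET" using lab_in[OF step.hyps] st by auto
      have le: "leS s l" "leT t m" using p(2) st lm unfolding prod_le_def by auto
      have lmL: "l \<in> leaves ES leS" "m \<in> leaves ET leT" using p(1) lm by auto
      have lmE: "l \<in> ES" "m \<in> ET" using lmL unfolding leaves_def by auto
      obtain c0 where c0: "c0 \<in> above EA leA x" using A.nonleaf_cover[OF step.hyps False] by blast
      have "\<exists>c\<in>above EA leA x. P (lab c) p"
        using lab_above[OF step.hyps False]
      proof
        assume b: "bij_betw lab (above EA leA x) ((\<lambda>s'. (s', snd (lab x))) ` above ES leS (fst (lab x)))"
        have im: "lab ` above EA leA x = (\<lambda>s'. (s', t)) ` above ES leS s"
          using bij_betw_imp_surj_on[OF b] st by simp
        have "above ES leS s \<noteq> {}" using c0 im by auto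
        then have "s \<noteq> l" using S.leaf_no_cover[OF lmL(1)] by auto
        then obtain d where d: "d \<in> above ES leS s" "leS d l"
          using S.cover_exists[OF sE(1) lmE(1) le(1)] by auto
        then have "(d, t) \<in> lab ` above EA leA x" using im by simp
        then obtain c where cc: "c \<in> above EA leA x" "lab c = (d,t)" by auto
        have "P (lab c) p" using cc(2) d le lm unfolding prod_le_def by simp
        then show ?thesis using cc(1) by blast
      next
        assume b: "bij_betw lab (above EA leA x) ((\<lambda>t'. (fst (lab x), t')) ` above ET leT (snd (lab x)))"
        have im: "lab ` above EA leA x = (\<lambda>t'. (s, t')) ` above ET leT t"
          using bij_betw_imp_surj_on[OF b] st by simp
        have "above ET leT t \<noteq> {}" using c0 im by auto
        then have "t \<noteq> m" using T.leaf_no_cover[OF lmL(2)] by auto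
        then obtain d where d: "d \<in> above ET leT t" "leT d m"
          using T.cover_exists[OF sE(2) lmE(2) le(2)] by auto
        then have "(s, d) \<in> lab ` above EA leA x" using im by simp
        then obtain c where cc: "c \<in> above EA leA x" "lab c = (s,d)" by auto
        have "P (lab c) p" using cc(2) d le lm unfolding prod_le_def by simp
        then show ?thesis using cc(1) by blast
      qed
      then obtain c where c: "c \<in> above EA leA x" "P (lab c) p" by blast
      have cE: "c \<in> EA" "leA x c" "c \<noteq> x" using A.aboveD[OF c(1)] by auto
      have "\<forall>p\<in>LL. P (lab c) p \<longrightarrow> (\<exists>l\<in>leaves EA leA. leA c l \<and> lab l = p)"
        using step.IH[OF cE] .
      then obtain l where l: "l\<in>leaves EA leA" "leA c l" "lab l = p" using p(1) c(2) by blast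
      have "l \<in> EA" using l(1) unfolding leaves_def by simp
      then have "leA x l" using A.trans[OF step.hyps cE(1) _ cE(2) l(2)] by simp
      then show ?thesis using l by blast
    qed
  qed
qed

lemma iso: assumes xE: "x \<in> EA" and yE: "y \<in> EA" shows "leA x y \<longleftrightarrow> P (lab x) (lab y)"
proof
  assume "leA x y" then show "P (lab x) (lab y)" using mono[OF xE yE] by simp
next
  assume xy: "P (lab x) (lab y)"
  have lx: "lab x \<in> ES\<times>ET" and ly: "lab y \<in> ES\<times>ET" using lab_in xE yE by auto
  obtain p where p: "p \<in> LL" "P (lab y) p" using leaf_pair_above[OF ly] by blast
  have pE: "p \<in> ES\<times>ET" using p(1) LL_sub by (rule subsetD[rotated])
  have xp: "P (lab x) p" using P_trans[OF lx ly pE xy p(2)] .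
  obtain l1 where l1: "l1\<in>leaves EA leA" "leA x l1" "lab l1 = p" using reach_leaf[OF xE] p(1) xp by blast
  obtain l2 where l2: "l2\<in>leaves EA leA" "leA y l2" "lab l2 = p" using reach_leaf[OF yE] p by blast
  have "inj_on lab (leaves EA leA)" using lab_leaves unfolding bij_betw_def by simp
  then have "l1 = l2" using l1 l2 unfolding inj_on_def by simp
  moreover have "l1 \<in> EA" using l1(1) unfolding leaves_def by simp
  ultimately have "leA x y \<or> leA y x" using A.lin[OF _ xE yE] l1 l2 by simp
  then show "leA x y"
  proof
    assume yx: "leA y x"
    show "leA x y"
    proof (cases "x = y")
      case True then show ?thesis using A.refl[OF xE] by simp
    next
      case False
      then have "P (lab y) (lab x)" "lab x \<noteq> lab y" using mono_strict[OF yE] xE yx by auto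
      then show ?thesis using P_antisym[OF lx ly xy] by simp
    qed
  qed
qed

lemma lab_inj: "inj_on lab EA"
proof (rule inj_onI)
  fix x y assume xy: "x \<in> EA" "y \<in> EA" "lab x = lab y"
  have "P (lab x) (lab y)" "P (lab y) (lab x)" using P_refl[OF lab_in[OF xy(1)]] xy(3) by auto
  then have "leA x y" "leA y x" using iso xy(1,2) by auto
  then show "x = y" using A.antisym xy(1,2) by simp
qed

end

context shuf begin

lemma image_pre: "shuffle_set_pre ES leS ET leT (lab ` EA)"
proof -
  have tr: "treelike (lab`EA) P" "leaves (lab`EA) P = lab ` leaves EA leA"
    using treelike_transfer[OF A.tl lab_inj, of P] iso by auto
  have "lab ` leaves EA leA = LL" using lab_leaves by (rule bij_betw_imp_surj_on)
  moreover have "lab ` EA \<subseteq> ES \<times> ET" using lab_in by (simp add: image_subset_iff)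
  ultimately show ?thesis unfolding shuffle_set_pre_def using tr by simp
qed

lemma image_max: assumes B: "shuffle_set_pre ES leS ET leT B" and sub: "lab ` EA \<subseteq> B"
  shows "B = lab ` EA"
proof -
  have BE: "B \<subseteq> ES \<times> ET" and Btl: "treelike B P" and BL: "leaves B P = LL"
    using B unfolding shuffle_set_pre_def by auto
  interpret B: tl B P by (rule tl.intro) (rule Btl)
  have labB: "lab z \<in> B" if "z \<in> EA" for z using sub that by auto
  have "b \<in> lab ` EA" if b: "b \<in> B" for b
  proof (rule ccontr)
    assume nb: "b \<notin> lab ` EA"
    define D where "D = {x\<in>EA. P (lab x) b}"
    have bE: "b \<in> ES \<times> ET" using b BE by auto
    have rD: "tree_root EA leA \<in> D" unfolding D_def using A.root_in lab_root rr_le[OF bE] by simp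
    have chain: "\<forall>x\<in>D. \<forall>y\<in>D. leA x y \<or> leA y x"
    proof (intro ballI)
      fix x y assume "x \<in> D" "y \<in> D"
      then have xy: "x \<in> EA" "y \<in> EA" "P (lab x) b" "P (lab y) b" unfolding D_def by auto
      then have "P (lab x) (lab y) \<or> P (lab y) (lab x)" using B.lin[OF b labB labB] by simp
      then show "leA x y \<or> leA y x" using iso xy(1,2) by auto
    qed
    have DE: "D \<subseteq> EA" unfolding D_def by auto
    obtain a where a: "a \<in> D" "\<forall>y\<in>D. leA y a" using A.max_of_chain[OF DE rD chain] by blast
    have aE: "a \<in> EA" "P (lab a) b" using a(1) unfolding D_def by auto
    obtain q where q: "q \<in> leaves B P" "P b q" using B.leaf_above[OF b] by blast
    have qLL: "q \<in> LL" using q(1) BL by simp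
    have qB: "q \<in> B" using q(1) unfolding leaves_def by simp
    have aq: "P (lab a) q" using B.trans[OF labB[OF aE(1)] b qB aE(2) q(2)] .
    obtain l where l: "l \<in> leaves EA leA" "leA a l" "lab l = q" using reach_leaf[OF aE(1)] aq qLL by blast
    have lE: "l \<in> EA" using l(1) unfolding leaves_def by simp
    have "a \<noteq> l"
    proof
      assume "a = l"
      then have "lab a \<in> LL" using l qLL by simp
      then have "b = lab a" using LL_max[OF _ bE aE(2)] by simp
      then show False using nb aE by auto
    qed
    then obtain y where y: "y \<in> above EA leA a" "leA y l"
      using A.cover_exists[OF aE(1) lE l(2)] by auto
    have yE: "y \<in> EA" "leA a y" "y \<noteq> a" using A.aboveD[OF y(1)] by auto
    have yq: "P (lab y) q" using iso[OF yE(1) lE] y(2) l(3) by simp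
    have "P (lab y) b \<or> P b (lab y)" using B.lin[OF qB labB[OF yE(1)] b] yq q(2) by simp
    then have by1: "P b (lab y)"
    proof
      assume "P (lab y) b"
      then have "y \<in> D" using yE D_def by auto
      then have "leA y a" using a by auto
      then have "y = a" using A.antisym[OF yE(1) aE(1)] yE(2) by simp
      then show ?thesis using yE(3) by simp
    qed
    have anl: "a \<notin> leaves EA leA" using y(1) A.leaf_no_cover by auto
    obtain s t where st: "lab a = (s,t)" by (cases "lab a")
    obtain s1 t1 where b1: "b = (s1,t1)" by (cases b)
    have stE: "s \<in> ES" "t \<in> ET" "s1 \<in> ES" "t1 \<in> ET" using lab_in[OF aE(1)] st b1 bE by auto
    have le1: "leS s s1" "leT t t1" using aE(2) st b1 unfolding prod_le_def by auto
    have nby: "b \<noteq> lab y" "b \<noteq> lab a" using nb yE(1) aE(1) by auto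
    from lab_above[OF aE(1) anl] show False
    proof
      assume bj: "bij_betw lab (above EA leA a) ((\<lambda>s'. (s', snd (lab a))) ` above ES leS (fst (lab a)))"
      have "lab y \<in> (\<lambda>s'. (s', t)) ` above ES leS s"
        using bij_betw_imp_surj_on[OF bj] y(1) st by auto
      then obtain c where c: "c \<in> above ES leS s" "lab y = (c, t)" by auto
      have cE: "c \<in> ES" using S.aboveD[OF c(1)] by simp
      have l2: "leS s1 c" "leT t1 t" using by1 c b1 unfolding prod_le_def by auto
      have "t1 = t" using T.antisym[OF stE(4) stE(2) l2(2) le1(2)] .
      moreover have "s1 = s \<or> s1 = c" using S.cover_eq[OF c(1) stE(3) le1(1) l2(1)] .
      ultimately show False using nby st c b1 by auto
    next
      assume bj: "bij_betw lab (above EA leA a) ((\<lambda>t'. (fst (lab a), t')) ` above ET leT (snd (lab a)))"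
      have "lab y \<in> (\<lambda>t'. (s, t')) ` above ET leT t"
        using bij_betw_imp_surj_on[OF bj] y(1) st by auto
      then obtain c where c: "c \<in> above ET leT t" "lab y = (s, c)" by auto
      have l2: "leS s1 s" "leT t1 c" using by1 c b1 unfolding prod_le_def by auto
      have "s1 = s" using S.antisym[OF stE(3) stE(1) l2(1) le1(1)] .
      moreover have "t1 = t \<or> t1 = c" using T.cover_eq[OF c(1) stE(4) le1(2) l2(2)] .
      ultimately show False using nby st c b1 by auto
    qed
  qed
  then show ?thesis using sub by auto
qed

lemma image_shuffle_set: "shuffle_set ES leS ET leT (lab ` EA)"
  unfolding shuffle_set_def using image_pre image_max by blast

end

lemma shuffle_iso:
  assumes "shuf ES leS ET leT EA leA labA" "shuf ES leS ET leT EB leB labB" "labA ` EA = labB ` EB"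
  shows "labelled_iso EA leA labA EB leB labB"
proof -
  interpret A1: shuf ES leS ET leT EA leA labA by fact
  interpret B1: shuf ES leS ET leT EB leB labB by fact
  define f where "f = the_inv_into EB labB \<circ> labA"
  have bA: "bij_betw labA EA (labA ` EA)" using A1.lab_inj by (simp add: bij_betw_imageI)
  have bB: "bij_betw (the_inv_into EB labB) (labB ` EB) EB"
    using B1.lab_inj by (simp add: bij_betw_imageI bij_betw_the_inv_into)
  have bf: "bij_betw f EA EB" unfolding f_def using bij_betw_trans[OF bA] bB assms(3) by simp
  have lf: "labB (f x) = labA x" if "x \<in> EA" for x
  proof -
    have "labA x \<in> labB ` EB" using that assms(3) by (metis imageI)
    then show ?thesis unfolding f_def using f_the_inv_into_f[OF B1.lab_inj] by simp
  qed
  have "leA x y \<longleftrightarrow> leB (f x) (f y)" if "x\<in>EA" "y\<in>EA" for x y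
  proof -
    have fx: "f x \<in> EB" "f y \<in> EB" using bf that unfolding bij_betw_def by auto
    have "leA x y \<longleftrightarrow> prod_le leS leT (labA x) (labA y)" using A1.iso[OF that] .
    also have "\<dots> \<longleftrightarrow> prod_le leS leT (labB (f x)) (labB (f y))" using lf that by simp
    also have "\<dots> \<longleftrightarrow> leB (f x) (f y)" using B1.iso[OF fx] by simp
    finally show ?thesis .
  qed
  then show ?thesis unfolding labelled_iso_def using bf lf by blast
qed


context two begin

lemma insert_pre:
  assumes pre: "shuffle_set_pre ES leS ET leT A" and z: "z \<in> ES\<times>ET" "z \<notin> A"
    and a1: "a1 \<in> A" "P z a1"
    and rt: "(\<forall>a\<in>A. P z a) \<or> (\<exists>a\<in>A. P a z)"
    and C: "\<forall>u\<in>A. \<forall>w\<in>A. P z w \<and> P u w \<longrightarrow> P u z \<or> P z u"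
  shows "shuffle_set_pre ES leS ET leT (insert z A)"
proof -
  have AE: "A \<subseteq> ES \<times> ET" and Atl: "treelike A P" and AL: "leaves A P = LL"
    using pre unfolding shuffle_set_pre_def by auto
  interpret A: tl A P by standard fact
  have IE: "insert z A \<subseteq> ES \<times> ET" using AE z by auto
  have tl: "treelike (insert z A) P" unfolding treelike_def
  proof (intro conjI)
    show "finite (insert z A)" using A.fin by simp
    show "\<forall>x\<in>insert z A. P x x" using IE P_refl by blast
    show "\<forall>x\<in>insert z A. \<forall>y\<in>insert z A. P x y \<and> P y x \<longrightarrow> x = y" using IE P_antisym by blast
    show "\<forall>x\<in>insert z A. \<forall>y\<in>insert z A. \<forall>w\<in>insert z A. P x y \<and> P y w \<longrightarrow> P x w"
      using IE P_trans by blast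
    show "\<exists>r\<in>insert z A. \<forall>x\<in>insert z A. P r x"
      using rt
    proof
      assume "\<forall>a\<in>A. P z a" then show ?thesis using P_refl z by blast
    next
      assume "\<exists>a\<in>A. P a z"
      then obtain a where "a \<in> A" "P a z" by blast
      then have "P (tree_root A P) z" using P_trans A.root_in A.root_le AE z by blast
      then show ?thesis using A.root_in A.root_le by blast
    qed
    show "\<forall>e\<in>insert z A. \<forall>x\<in>insert z A. \<forall>y\<in>insert z A. P x e \<and> P y e \<longrightarrow> P x y \<or> P y x"
    proof (intro ballI impI)
      fix e x y assume ex: "e \<in> insert z A" "x \<in> insert z A" "y \<in> insert z A" "P x e \<and> P y e"
      show "P x y \<or> P y x"
      proof (cases "x = z \<or> y = z")
        case xyz: True
        show ?thesis
        proof (cases "e = z")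
          case True
          then show ?thesis using ex xyz by auto
        next
          case False
          then have eA: "e \<in> A" using ex by simp
          show ?thesis
          proof (cases "x = z")
            case True
            have "y \<in> A \<or> y = z" using ex by auto
            then show ?thesis using C eA ex True P_refl[OF z(1)] by auto
          next
            case False
            then have "y = z" "x \<in> A" using xyz ex by auto
            then show ?thesis using C eA ex by auto
          qed
        qed
      next
        case False
        then have xy: "x \<in> A" "y \<in> A" using ex by auto
        show ?thesis
        proof (cases "e = z")
          case True
          then have "P x a1" "P y a1" using ex P_trans a1 AE z xy by blast+
          then show ?thesis using A.lin a1 xy by blast
        next
          case False
          then show ?thesis using A.lin ex xy by auto
        qed
      qed
    qed
  qed
  have "leaves (insert z A) P = LL"
  proof
    show "leaves (insert z A) P \<subseteq> LL"
    proof
      fix x assume x: "x \<in> leaves (insert z A) P"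
      then have "x \<noteq> z" using a1 z unfolding leaves_def by auto
      then show "x \<in> LL" using x AL unfolding leaves_def by auto
    qed
    show "LL \<subseteq> leaves (insert z A) P"
      using AL LL_max IE unfolding leaves_def by blast
  qed
  then show ?thesis using tl IE unfolding shuffle_set_pre_def by blast
qed

end

locale ss = two ES leS ET leT
  for ES :: "'a set" and leS and ET :: "'b set" and leT +
  fixes A :: "('a \<times> 'b) set"
  assumes ssA: "shuffle_set ES leS ET leT A"
begin

lemma pre: "shuffle_set_pre ES leS ET leT A" using ssA unfolding shuffle_set_def by blast
lemma maxl: "shuffle_set_pre ES leS ET leT B \<Longrightarrow> A \<subseteq> B \<Longrightarrow> B = A"
  using ssA unfolding shuffle_set_def by blast
lemma AE: "A \<subseteq> ES \<times> ET" and Atl: "treelike A P" and AL: "leaves A P = LL"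
  using pre unfolding shuffle_set_pre_def by auto

sublocale A: tl A P by (rule tl.intro) (rule Atl)

lemma no_insert: "z \<in> ES\<times>ET \<Longrightarrow> a1 \<in> A \<Longrightarrow> P z a1 \<Longrightarrow> (\<forall>a\<in>A. P z a) \<or> (\<exists>a\<in>A. P a z)
   \<Longrightarrow> \<forall>u\<in>A. \<forall>w\<in>A. P z w \<and> P u w \<longrightarrow> P u z \<or> P z u \<Longrightarrow> z \<in> A"
  using insert_pre[OF pre] maxl by blast

lemma rr_A: "rr \<in> A"
proof -
  obtain a where "a \<in> A" using A.root_in by blast
  then show ?thesis using no_insert[of rr a] rr_in rr_le AE by blast
qed

lemma root_A: "tree_root A P = rr"
  using A.root_unique rr_A rr_le AE by blast

lemma LL_A: "LL \<subseteq> A" using AL unfolding leaves_def by auto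

lemma lemX:
  assumes x: "(s,t) \<in> A" and y: "(s',t') \<in> above A P (s,t)" and ne: "s' \<noteq> s"
    and nos: "\<forall>y''\<in>above A P (s,t). fst y'' \<noteq> s"
  shows "s' \<in> above ES leS s \<and> t' = t"
proof -
  have yE: "(s',t') \<in> A" "P (s,t) (s',t')" "(s',t') \<noteq> (s,t)" using A.aboveD y by auto
  have stE: "s \<in> ES" "t \<in> ET" "s' \<in> ES" "t' \<in> ET" using AE x yE by auto
  have le: "leS s s'" "leT t t'" using yE unfolding prod_le_def by auto
  obtain c where c: "c \<in> above ES leS s" "leS c s'" using S.cover_exists stE le ne by blast
  have cE: "c \<in> ES" "leS s c" "c \<noteq> s" using S.aboveD c by auto
  define z where "z = (c,t)"
  have zE: "z \<in> ES \<times> ET" using cE stE z_def by auto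
  have zy: "P z (s',t')" using c le unfolding z_def prod_le_def by auto
  have xz: "P (s,t) z" using cE T.refl stE unfolding z_def prod_le_def by auto
  have C: "\<forall>u\<in>A. \<forall>w\<in>A. P z w \<and> P u w \<longrightarrow> P u z \<or> P z u"
  proof (intro ballI impI)
    fix u w assume uw: "u \<in> A" "w \<in> A" "P z w \<and> P u w"
    have xw: "P (s,t) w" using P_trans xz uw zE AE x by blast
    have "P u (s,t) \<or> P (s,t) u" using A.lin uw x xw by blast
    then show "P u z \<or> P z u"
    proof
      assume "P u (s,t)" then show ?thesis using P_trans xz AE uw x zE by blast
    next
      assume xu: "P (s,t) u"
      show ?thesis
      proof (cases "u = (s,t)")
        case True then show ?thesis using xz by simp
      next
        case False
        then obtain y2 where y2: "y2 \<in> above A P (s,t)" "P y2 u"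
          using A.cover_exists x uw xu by blast
        obtain s2 t2 where y2e: "y2 = (s2,t2)" by fastforce
        have y2E: "y2 \<in> A" "P (s,t) y2" using A.aboveD y2 by auto
        have s2ne: "s2 \<noteq> s" using nos y2 y2e by auto
        have y2w: "P y2 w" using P_trans y2 uw AE y2E by blast
        obtain sw tw where we: "w = (sw,tw)" by fastforce
        have wE: "sw \<in> ES" "s2 \<in> ES" using AE uw y2E we y2e by auto
        have "leS c sw" "leS s2 sw" using uw y2w we y2e unfolding z_def prod_le_def by auto
        then have "leS c s2 \<or> leS s2 c" using S.lin wE cE by blast
        moreover have "leS s s2" "leT t t2" using y2E y2e unfolding prod_le_def by auto
        ultimately have "leS c s2" using S.cover_eq[OF c(1)] s2ne wE S.refl by blast
        then have "P z y2" using y2e \<open>leT t t2\<close> unfolding z_def prod_le_def by auto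
        then show ?thesis using P_trans zE AE y2E uw y2 by blast
      qed
    qed
  qed
  have "z \<in> A" using no_insert[OF zE yE(1) zy] C xz x by blast
  then have "z = (s,t) \<or> z = (s',t')" using A.cover_eq[OF y _ xz zy] by blast
  then show ?thesis using cE c z_def by auto
qed

lemma lemY:
  assumes x: "(s,t) \<in> A" and y: "(s',t') \<in> above A P (s,t)" and ne: "t' \<noteq> t"
    and nos: "\<forall>y''\<in>above A P (s,t). snd y'' \<noteq> t"
  shows "t' \<in> above ET leT t \<and> s' = s"
proof -
  have yE: "(s',t') \<in> A" "P (s,t) (s',t')" "(s',t') \<noteq> (s,t)" using A.aboveD y by auto
  have stE: "s \<in> ES" "t \<in> ET" "s' \<in> ES" "t' \<in> ET" using AE x yE by auto
  have le: "leS s s'" "leT t t'" using yE unfolding prod_le_def by auto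
  obtain c where c: "c \<in> above ET leT t" "leT c t'" using T.cover_exists stE le ne by blast
  have cE: "c \<in> ET" "leT t c" "c \<noteq> t" using T.aboveD c by auto
  define z where "z = (s,c)"
  have zE: "z \<in> ES \<times> ET" using cE stE z_def by auto
  have zy: "P z (s',t')" using c le unfolding z_def prod_le_def by auto
  have xz: "P (s,t) z" using cE S.refl stE unfolding z_def prod_le_def by auto
  have C: "\<forall>u\<in>A. \<forall>w\<in>A. P z w \<and> P u w \<longrightarrow> P u z \<or> P z u"
  proof (intro ballI impI)
    fix u w assume uw: "u \<in> A" "w \<in> A" "P z w \<and> P u w"
    have xw: "P (s,t) w" using P_trans xz uw zE AE x by blast
    have "P u (s,t) \<or> P (s,t) u" using A.lin uw x xw by blast
    then show "P u z \<or> P z u"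
    proof
      assume "P u (s,t)" then show ?thesis using P_trans xz AE uw x zE by blast
    next
      assume xu: "P (s,t) u"
      show ?thesis
      proof (cases "u = (s,t)")
        case True then show ?thesis using xz by simp
      next
        case False
        then obtain y2 where y2: "y2 \<in> above A P (s,t)" "P y2 u"
          using A.cover_exists x uw xu by blast
        obtain s2 t2 where y2e: "y2 = (s2,t2)" by fastforce
        have y2E: "y2 \<in> A" "P (s,t) y2" using A.aboveD y2 by auto
        have t2ne: "t2 \<noteq> t" using nos y2 y2e by auto
        have y2w: "P y2 w" using P_trans y2 uw AE y2E by blast
        obtain sw tw where we: "w = (sw,tw)" by fastforce
        have wE: "tw \<in> ET" "t2 \<in> ET" using AE uw y2E we y2e by auto
        have "leT c tw" "leT t2 tw" using uw y2w we y2e unfolding z_def prod_le_def by auto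
        then have "leT c t2 \<or> leT t2 c" using T.lin wE cE by blast
        moreover have "leS s s2" "leT t t2" using y2E y2e unfolding prod_le_def by auto
        ultimately have "leT c t2" using T.cover_eq[OF c(1)] t2ne wE T.refl by blast
        then have "P z y2" using y2e \<open>leS s s2\<close> unfolding z_def prod_le_def by auto
        then show ?thesis using P_trans zE AE y2E uw y2 by blast
      qed
    qed
  qed
  have "z \<in> A" using no_insert[OF zE yE(1) zy] C xz x by blast
  then have "z = (s,t) \<or> z = (s',t')" using A.cover_eq[OF y _ xz zy] by blast
  then show ?thesis using cE c z_def by auto
qed

end

context ss begin

lemma cover_S_sup:
  assumes x: "(s,t) \<in> A" "(s,t) \<notin> leaves A P"
    and sub: "above A P (s,t) \<subseteq> (\<lambda>s'. (s',t)) ` above ES leS s"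
  shows "(\<lambda>s'. (s',t)) ` above ES leS s \<subseteq> above A P (s,t)"
proof
  fix z assume "z \<in> (\<lambda>s'. (s',t)) ` above ES leS s"
  then obtain c where c: "c \<in> above ES leS s" "z = (c,t)" by blast
  have cE: "c \<in> ES" "leS s c" "c \<noteq> s" using S.aboveD[OF c(1)] by auto
  have stE: "(s,t) \<in> ES \<times> ET" using subsetD[OF AE x(1)] .
  then have sE: "s \<in> ES" and tE: "t \<in> ET" by auto
  obtain l where l: "l \<in> leaves ES leS" "leS c l" using S.leaf_above[OF cE(1)] by blast
  obtain m where m: "m \<in> leaves ET leT" "leT t m" using T.leaf_above[OF tE] by blast
  have lmA: "(l,m) \<in> leaves A P" using AL l m by simp
  have lmA': "(l,m) \<in> A" using lmA unfolding leaves_def by simp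
  have lE: "l \<in> ES" using l unfolding leaves_def by auto
  have mE: "m \<in> ET" using m unfolding leaves_def by auto
  have "leS s l" using S.trans[OF sE cE(1) lE cE(2) l(2)] .
  then have xl: "P (s,t) (l,m)" using m(2) unfolding prod_le_def by simp
  have "(l,m) \<noteq> (s,t)" using lmA x(2) by auto
  then obtain y where y: "y \<in> above A P (s,t)" "P y (l,m)"
    using A.cover_exists[OF x(1) lmA' xl] by auto
  then obtain c' where c': "c' \<in> above ES leS s" "y = (c',t)" using sub by blast
  have c'E: "c' \<in> ES" using S.aboveD[OF c'(1)] by simp
  have "leS c' l" using y(2) c'(2) unfolding prod_le_def by simp
  then have "leS c c' \<or> leS c' c" using S.lin[OF lE cE(1) c'E l(2)] by simp
  then have "c = c'" using S.covers_incomp[OF c(1) c'(1)] S.covers_incomp[OF c'(1) c(1)] by auto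
  then show "z \<in> above A P (s,t)" using c c' y by simp
qed

lemma cover_T_sup:
  assumes x: "(s,t) \<in> A" "(s,t) \<notin> leaves A P"
    and sub: "above A P (s,t) \<subseteq> (\<lambda>t'. (s,t')) ` above ET leT t"
  shows "(\<lambda>t'. (s,t')) ` above ET leT t \<subseteq> above A P (s,t)"
proof
  fix z assume "z \<in> (\<lambda>t'. (s,t')) ` above ET leT t"
  then obtain c where c: "c \<in> above ET leT t" "z = (s,c)" by blast
  have cE: "c \<in> ET" "leT t c" "c \<noteq> t" using T.aboveD[OF c(1)] by auto
  have stE: "(s,t) \<in> ES \<times> ET" using subsetD[OF AE x(1)] .
  then have sE: "s \<in> ES" and tE: "t \<in> ET" by auto
  obtain l where l: "l \<in> leaves ET leT" "leT c l" using T.leaf_above[OF cE(1)] by blast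
  obtain m where m: "m \<in> leaves ES leS" "leS s m" using S.leaf_above[OF sE] by blast
  have lmA: "(m,l) \<in> leaves A P" using AL l m by simp
  have lmA': "(m,l) \<in> A" using lmA unfolding leaves_def by simp
  have lE: "l \<in> ET" using l unfolding leaves_def by auto
  have "leT t l" using T.trans[OF tE cE(1) lE cE(2) l(2)] .
  then have xl: "P (s,t) (m,l)" using m(2) unfolding prod_le_def by simp
  have "(m,l) \<noteq> (s,t)" using lmA x(2) by auto
  then obtain y where y: "y \<in> above A P (s,t)" "P y (m,l)"
    using A.cover_exists[OF x(1) lmA' xl] by auto
  then obtain c' where c': "c' \<in> above ET leT t" "y = (s,c')" using sub by blast
  have c'E: "c' \<in> ET" using T.aboveD[OF c'(1)] by simp
  have "leT c' l" using y(2) c'(2) unfolding prod_le_def by simp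
  then have "leT c c' \<or> leT c' c" using T.lin[OF lE cE(1) c'E l(2)] by simp
  then have "c = c'" using T.covers_incomp[OF c(1) c'(1)] T.covers_incomp[OF c'(1) c(1)] by auto
  then show "z \<in> above A P (s,t)" using c c' y by simp
qed

lemma cover_struct:
  assumes x: "(s,t) \<in> A" "(s,t) \<notin> leaves A P"
  shows "above A P (s,t) = (\<lambda>s'. (s',t)) ` above ES leS s \<or>
         above A P (s,t) = (\<lambda>t'. (s,t')) ` above ET leT t"
proof (cases "\<forall>y\<in>above A P (s,t). fst y \<noteq> s")
  case True
  have sub: "above A P (s,t) \<subseteq> (\<lambda>s'. (s',t)) ` above ES leS s"
  proof
    fix y assume y: "y \<in> above A P (s,t)"
    obtain s' t' where ye: "y = (s',t')" by (cases y)
    have "s' \<noteq> s" using True y ye by auto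
    then have "s' \<in> above ES leS s \<and> t' = t" using lemX[OF x(1), of s' t'] True y ye by simp
    then show "y \<in> (\<lambda>s'. (s',t)) ` above ES leS s" using ye by simp
  qed
  show ?thesis using sub cover_S_sup[OF x sub] by (intro disjI1) (rule equalityI)
next
  case False
  then obtain y1 where y1a: "y1 \<in> above A P (s,t)" "fst y1 = s" by auto
  obtain t1 where y1: "(s,t1) \<in> above A P (s,t)" using y1a by (cases y1) auto
  have y1E: "(s,t1) \<in> A" "P (s,t) (s,t1)" "(s,t1) \<noteq> (s,t)" using A.aboveD[OF y1] by auto
  have not: "\<forall>y\<in>above A P (s,t). snd y \<noteq> t"
  proof (rule ccontr)
    assume "\<not> ?thesis"
    then obtain y2 where y2a: "y2 \<in> above A P (s,t)" "snd y2 = t" by auto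
    obtain s2 where y2: "(s2,t) \<in> above A P (s,t)" using y2a by (cases y2) auto
    have y2E: "(s2,t) \<in> A" "P (s,t) (s2,t)" "(s2,t) \<noteq> (s,t)" using A.aboveD[OF y2] by auto
    have s2E: "s2 \<in> ES" using AE y2E(1) by auto
    have t1E: "t1 \<in> ET" using AE y1E(1) by auto
    have sE: "s \<in> ES" and tE: "t \<in> ET" using AE x(1) by auto
    obtain l where l: "l \<in> leaves ES leS" "leS s2 l" using S.leaf_above[OF s2E] by blast
    obtain m where m: "m \<in> leaves ET leT" "leT t1 m" using T.leaf_above[OF t1E] by blast
    have lE: "l \<in> ES" using l unfolding leaves_def by auto
    have mE: "m \<in> ET" using m unfolding leaves_def by auto
    have lmA: "(l,m) \<in> A" using LL_A l m by auto
    have "leS s s2" using y2E(2) unfolding prod_le_def by simp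
    then have sl: "leS s l" using S.trans[OF sE s2E lE _ l(2)] by simp
    have "leT t t1" using y1E(2) unfolding prod_le_def by simp
    then have tm: "leT t m" using T.trans[OF tE t1E mE _ m(2)] by simp
    have "P (s,t1) (l,m)" "P (s2,t) (l,m)" using l m sl tm unfolding prod_le_def by auto
    then have "P (s,t1) (s2,t) \<or> P (s2,t) (s,t1)" using A.lin[OF lmA y1E(1) y2E(1)] by simp
    then have "(s,t1) = (s2,t)" using A.covers_incomp[OF y1 y2] A.covers_incomp[OF y2 y1] by auto
    then show False using y1E(3) by auto
  qed
  have sub: "above A P (s,t) \<subseteq> (\<lambda>t'. (s,t')) ` above ET leT t"
  proof
    fix y assume y: "y \<in> above A P (s,t)"
    obtain s' t' where ye: "y = (s',t')" by (cases y)
    have "t' \<noteq> t" using not y ye by auto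
    then have "t' \<in> above ET leT t \<and> s' = s" using lemY[OF x(1), of s' t'] not y ye by simp
    then show "y \<in> (\<lambda>t'. (s,t')) ` above ET leT t" using ye by simp
  qed
  show ?thesis using sub cover_T_sup[OF x sub] by (intro disjI2) (rule equalityI)
qed

lemma is_shuffle_id: "is_shuffle ES leS ET leT A P id"
  unfolding is_shuffle_def
proof (intro conjI ballI impI)
  show "treelike A P" by (rule Atl)
  show "id ` A \<subseteq> ES \<times> ET" using AE by simp
  show "id (tree_root A P) = rr" using root_A by simp
  show "bij_betw id (leaves A P) LL" using AL by simp
  fix x assume "x \<in> A" "x \<notin> leaves A P"
  then show "bij_betw id (above A P x) ((\<lambda>s'. (s', snd (id x))) ` above ES leS (fst (id x))) \<or>
        bij_betw id (above A P x) ((\<lambda>t'. (fst (id x), t')) ` above ET leT (snd (id x)))"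
    using cover_struct[of "fst x" "snd x"] by (simp add: bij_betw_id_iff)
qed

end

lemma shuf_of: "two ES leS ET leT \<Longrightarrow> is_shuffle ES leS ET leT EA leA lab \<Longrightarrow> shuf ES leS ET leT EA leA lab"
  by (intro shuf.intro shuf_axioms.intro)

theorem mainTheorem2:
  fixes ES :: "'a set" and leS :: "'a \<Rightarrow> 'a \<Rightarrow> bool"
    and ET :: "'b set" and leT :: "'b \<Rightarrow> 'b \<Rightarrow> bool"
  assumes "treelike ES leS" and "treelike ET leT"
  shows
    "(\<forall>(EA :: 'c set) leA lab. is_shuffle ES leS ET leT EA leA lab \<longrightarrow>
        shuffle_set ES leS ET leT (lab ` EA)) \<and>
     (\<forall>(EA :: 'c set) leA labA (EB :: 'd set) leB labB.
        is_shuffle ES leS ET leT EA leA labA \<and> is_shuffle ES leS ET leT EB leB labB \<and>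
        labA ` EA = labB ` EB \<longrightarrow> labelled_iso EA leA labA EB leB labB) \<and>
     (\<forall>A. shuffle_set ES leS ET leT A \<longrightarrow>
        (\<exists>(EA :: ('a \<times> 'b) set) leA lab. is_shuffle ES leS ET leT EA leA lab \<and> lab ` EA = A)) \<and>
     (\<forall>(EA :: 'c set) leA lab. is_shuffle ES leS ET leT EA leA lab \<longrightarrow>
        (\<forall>x\<in>EA. \<forall>y\<in>EA. leA x y \<longleftrightarrow> prod_le leS leT (lab x) (lab y)))"
proof -
  interpret two ES leS ET leT
    by (intro two.intro tl.intro assms)
  have sh: "shuf ES leS ET leT EA leA lab" if "is_shuffle ES leS ET leT EA leA lab" for EA leA lab
    by (intro shuf.intro two_axioms shuf_axioms.intro that)
  have ssi: "ss ES leS ET leT A" if "shuffle_set ES leS ET leT A" for A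
    by (intro ss.intro two_axioms ss_axioms.intro that)
  show ?thesis
  proof (intro conjI allI impI)
    fix EA :: "'c set" and leA lab assume h: "is_shuffle ES leS ET leT EA leA lab"
    show "shuffle_set ES leS ET leT (lab ` EA)" using shuf.image_shuffle_set[OF sh[OF h]] .
  next
    fix EA :: "'c set" and leA labA and EB :: "'d set" and leB labB
    assume h: "is_shuffle ES leS ET leT EA leA labA \<and> is_shuffle ES leS ET leT EB leB labB \<and>
        labA ` EA = labB ` EB"
    have h1: "shuf ES leS ET leT EA leA labA" by (rule shuf_of[OF two_axioms h[THEN conjunct1]])
    have h2: "shuf ES leS ET leT EB leB labB"
      by (rule shuf_of[OF two_axioms h[THEN conjunct2, THEN conjunct1]])
    show "labelled_iso EA leA labA EB leB labB" using shuffle_iso[OF h1 h2] h by simp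
  next
    fix A assume "shuffle_set ES leS ET leT A"
    then have "is_shuffle ES leS ET leT A (prod_le leS leT) id" using ss.is_shuffle_id[OF ssi] by simp
    then show "\<exists>(EA :: ('a \<times> 'b) set) leA lab. is_shuffle ES leS ET leT EA leA lab \<and> lab ` EA = A"
      by (intro exI[of _ A] exI[of _ "prod_le leS leT"] exI[of _ id]) simp
  next
    fix EA :: "'c set" and leA lab assume h: "is_shuffle ES leS ET leT EA leA lab"
    show "\<forall>x\<in>EA. \<forall>y\<in>EA. leA x y \<longleftrightarrow> prod_le leS leT (lab x) (lab y)"
      using shuf.iso[OF sh[OF h]] by simp
  qed
qed

end
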